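(* Let $K$ be any field, $n\ge 3$, $V$ an $n$-dimensional $K$-vector space, and let $X$ be a symmetric generating set of $SL(V)$ with $1\in X$ which contains a whole transvection group $t^K$. Let $$Y_1=\{x_{n^2}\cdots x_1\, t^\lambda\, x_1^{-1}\cdots x_{n^2}^{-1}\,:\,\lambda\in K,\ x_1,\ldots,x_{n^2}\in X\},$$ and assume that every edge of the transvection graph $\Gamma(Y_1)$ is two-way directed. Then $\Gamma(Y_1)$ contains a non-singular chordless cycle, i.e. there are $k\ge 3$ and pairwise distinct transvections $r_1,\ldots,r_k\in Y_1\setminus\{1\}$, $r_i=1+v_i\otimes\phi_i$, such that for $i\neq j$, $(r_i,r_j)$ is an edge if and only if $i-j\equiv\pm1\pmod k$, and $$\prod_{i=1}^k\phi_i(v_{i+1})+(-1)^{k-1}\prod_{i=1}^k\phi_{i+1}(v_i)\neq 0,$$ indices taken modulo $k$.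
   Context: A transvection is an element $1+d\otimes\phi\in SL(V)$ acting by $x\mapsto x+\phi(x)d$, with $0\ne d\in V$, $0\ne\phi\in V^*$, $\phi(d)=0$; $t^\lambda=1+\lambda d\otimes\phi$ for $t=1+d\otimes\phi$, and $t^K=\{t^\lambda:\lambda\in K\}$. For a set $Y$ of transvections, $\Gamma(Y)$ is the directed graph with vertex set $Y\setminus\{1\}$ with a directed edge $(r,s)$ from $r=1+d_1\otimes\phi_1$ to $s=1+d_2\otimes\phi_2$ iff $\phi_2(d_1)\neq 0$; an edge $(r,s)$ is two-way directed if $(s,r)$ is also an edge. The non-singularity condition does not depend on the choice of representatives $v_i,\phi_i$. *)

theory Defs
  imports "HOL-Analysis.Analysis"
begin

text \<open>V = K^n (vectors 'a^'n), linear maps = matrices 'a^'n^'n acting by *v.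
  A linear functional phi in V* is represented by a vector, acting by the standard pairing.\<close>

definition pair :: "'a::field ^'n \<Rightarrow> 'a ^'n \<Rightarrow> 'a" where
  "pair phi x = (\<Sum>i\<in>UNIV. phi $ i * x $ i)"

text \<open>d \<otimes> phi as a matrix: x \<mapsto> phi(x) d\<close>
definition tens :: "'a::field ^'n \<Rightarrow> 'a ^'n \<Rightarrow> 'a ^'n ^'n" where
  "tens d phi = (\<chi> i j. d $ i * phi $ j)"

definition SL :: "('a::field ^'n ^'n) set" where
  "SL = {A. det A = 1}"

definition transv_rep :: "'a::field ^'n ^'n \<Rightarrow> 'a ^'n \<Rightarrow> 'a ^'n \<Rightarrow> bool" where
  "transv_rep r d phi \<longleftrightarrow> d \<noteq> 0 \<and> phi \<noteq> 0 \<and> pair phi d = 0 \<and> r = mat 1 + tens d phi"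

inductive_set gen_subgroup :: "('a::field ^'n ^'n) set \<Rightarrow> ('a ^'n ^'n) set"
  for X where
  one: "mat 1 \<in> gen_subgroup X"
| gen: "x \<in> X \<Longrightarrow> x \<in> gen_subgroup X"
| mult: "a \<in> gen_subgroup X \<Longrightarrow> b \<in> gen_subgroup X \<Longrightarrow> a ** b \<in> gen_subgroup X"
| inv: "a \<in> gen_subgroup X \<Longrightarrow> matrix_inv a \<in> gen_subgroup X"

definition listprod :: "('a::field ^'n ^'n) list \<Rightarrow> 'a ^'n ^'n" where
  "listprod xs = foldr (**) xs (mat 1)"

text \<open>Edge (r,s) in Gamma(Y): r = 1 + d1 \<otimes> phi1, s = 1 + d2 \<otimes> phi2 with phi2(d1) \<noteq> 0
  (independent of the representatives).\<close>
definition tedge :: "'a::field ^'n ^'n \<Rightarrow> 'a ^'n ^'n \<Rightarrow> bool" where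
  "tedge r s \<longleftrightarrow> (\<exists>d1 phi1 d2 phi2. transv_rep r d1 phi1 \<and> transv_rep s d2 phi2 \<and> pair phi2 d1 \<noteq> 0)"

end

theory Submission
  imports Defs
begin

lemma pair_add2: "pair phi (x + y) = pair phi x + pair phi y"
  by (simp add: pair_def sum.distrib distrib_left)
lemma pair_add1: "pair (phi + psi) x = pair phi x + pair psi x"
  by (simp add: pair_def sum.distrib distrib_right)
lemma pair_diff2: "pair phi (x - y) = pair phi x - pair phi y"
  by (simp add: pair_def sum_subtractf right_diff_distrib)
lemma pair_diff1: "pair (phi - psi) x = pair phi x - pair psi x"
  by (simp add: pair_def sum_subtractf left_diff_distrib)
lemma pair_smult2: "pair phi (c *s x) = c * pair phi x"
  by (simp add: pair_def sum_distrib_left sum_distrib_left sum_distrib_right mult_ac)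
lemma pair_smult1: "pair (c *s phi) x = c * pair phi x"
  by (simp add: pair_def sum_distrib_left sum_distrib_left sum_distrib_right mult_ac)
lemma pair_zero2[simp]: "pair phi 0 = 0" by (simp add: pair_def)
lemma pair_zero1[simp]: "pair 0 x = 0" by (simp add: pair_def)
lemma pair_axis2: "pair phi (axis i 1) = phi $ i"
proof -
  have "(\<lambda>k. phi $ k * axis i 1 $ k) = (\<lambda>k. if k = i then phi $ k else 0)"
    by (auto simp: axis_def)
  then show ?thesis unfolding pair_def by (metis (no_types) sum.delta finite UNIV_I)
qed
lemma pair_axis1: "pair (axis i 1) x = x $ i"
proof -
  have "(\<lambda>k. axis i 1 $ k * x $ k) = (\<lambda>k. if k = i then x $ k else 0)"
    by (auto simp: axis_def)
  then show ?thesis unfolding pair_def by (metis (no_types) sum.delta finite UNIV_I)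
qed

lemma tens_mv: "tens d phi *v x = pair phi x *s d"
  by (simp add: vec_eq_iff tens_def matrix_vector_mult_def pair_def sum_distrib_left sum_distrib_left sum_distrib_right mult_ac)
lemma vm_tens: "x v* tens d phi = pair x d *s phi"
  by (simp add: vec_eq_iff tens_def vector_matrix_mult_def pair_def sum_distrib_left sum_distrib_right mult_ac)
lemma mult_tens: "A ** tens d phi = tens (A *v d) phi"
  by (simp add: vec_eq_iff tens_def matrix_matrix_mult_def matrix_vector_mult_def sum_distrib_left sum_distrib_right mult_ac)
lemma tens_mult: "tens d phi ** B = tens d (phi v* B)"
  by (simp add: vec_eq_iff tens_def matrix_matrix_mult_def vector_matrix_mult_def sum_distrib_left sum_distrib_left sum_distrib_right mult_ac)
lemma tens_tens: "tens u v ** tens x y = tens (pair v x *s u) y"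
  unfolding tens_mult vm_tens by (simp add: tens_def vec_eq_iff mult_ac)
lemma pair_vm: "pair (x v* M) y = pair x (M *v y)"
  unfolding pair_def vector_matrix_mult_def matrix_vector_mult_def
  by (simp add: sum_distrib_left sum_distrib_right mult.assoc mult.left_commute) (rule sum.swap)
lemma pair_comm_tens: "pair psi (tens u v *v x) = pair v x * pair psi u"
  by (simp add: tens_mv pair_smult2)
lemma tens_zero_iff: "tens d phi = 0 \<longleftrightarrow> d = 0 \<or> phi = 0"
proof
  assume h: "tens d phi = 0"
  show "d = 0 \<or> phi = 0"
  proof (rule ccontr)
    assume "\<not> (d = 0 \<or> phi = 0)"
    then have "d \<noteq> 0" "phi \<noteq> 0" by auto
    then obtain i j where "d $ i \<noteq> 0" "phi $ j \<noteq> 0" by (metis vec_eq_iff zero_index)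
    moreover have "tens d phi $ i $ j = 0" using h by simp
    then have "d $ i * phi $ j = 0" by (simp add: tens_def)
    ultimately show False by simp
  qed
next
  assume "d = 0 \<or> phi = 0"
  then show "tens d phi = 0" by (elim disjE) (simp_all add: tens_def vec_eq_iff)
qed

lemma minv_unique:
  fixes A B :: "'a::field^'n^'n"
  assumes "A ** B = mat 1" shows "matrix_inv A = B"
proof -
  have BA: "B ** A = mat 1" using assms matrix_left_right_inverse by blast
  have "\<exists>A'. A ** A' = mat 1 \<and> A' ** A = mat 1" using assms BA by blast
  then have h: "A ** matrix_inv A = mat 1 \<and> matrix_inv A ** A = mat 1"
    unfolding matrix_inv_def by (rule someI_ex)
  have "matrix_inv A = matrix_inv A ** (A ** B)" using assms by simp
  also have "\<dots> = (matrix_inv A ** A) ** B" by (simp add: matrix_mul_assoc)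
  also have "\<dots> = B" using h by simp
  finally show ?thesis .
qed

lemma det1_inv:
  fixes A :: "'a::field^'n^'n"
  assumes "det A = 1"
  shows "A ** matrix_inv A = mat 1" "matrix_inv A ** A = mat 1"
proof -
  have "invertible A" using assms invertible_det_nz by force
  then obtain A' where "A ** A' = mat 1" "A' ** A = mat 1" unfolding invertible_def by blast
  then have "matrix_inv A = A'" using minv_unique by blast
  then show "A ** matrix_inv A = mat 1" "matrix_inv A ** A = mat 1"
    using \<open>A ** A' = mat 1\<close> \<open>A' ** A = mat 1\<close> by auto
qed

lemma det_minv:
  fixes A :: "'a::field^'n^'n"
  assumes "det A = 1" shows "det (matrix_inv A) = 1"
  using det1_inv(1)[OF assms] det_mul[of A "matrix_inv A"] assms by simp

lemma minv_mult:
  fixes A B :: "'a::field^'n^'n"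
  assumes "det A = 1" "det B = 1"
  shows "matrix_inv (A ** B) = matrix_inv B ** matrix_inv A"
proof (rule minv_unique)
  have "A ** B ** (matrix_inv B ** matrix_inv A) = A ** (B ** matrix_inv B) ** matrix_inv A"
    by (simp add: matrix_mul_assoc)
  then show "A ** B ** (matrix_inv B ** matrix_inv A) = mat 1"
    using det1_inv[OF assms(1)] det1_inv[OF assms(2)] by simp
qed

lemma minv_one[simp]: "matrix_inv (mat 1 :: 'a::field^'n^'n) = mat 1"
  by (rule minv_unique) simp


lemma matrix_add_rdistrib': "((B + C) ** A) = (B ** A) + (C ** A)"
  by (vector matrix_matrix_mult_def sum.distrib[symmetric] field_simps)

lemma tens_add1: "tens x e + tens y e = tens (x + y) e"
  by (simp add: tens_def vec_eq_iff distrib_right)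
lemma tens_zero1[simp]: "tens 0 e = 0"
  by (simp add: tens_def vec_eq_iff)

lemma transv_mult:
  "(mat 1 + tens u v) ** (mat 1 + tens x y) = mat 1 + tens u v + tens x y + tens (pair v x *s u) y"
  by (simp add: matrix_add_ldistrib matrix_add_rdistrib' tens_tens add_ac)

lemma transv_inv_mult:
  assumes "pair v u = 0"
  shows "(mat 1 + tens u v) ** (mat 1 + tens (- u) v) = mat 1"
proof -
  have "tens u v + tens (- u) v = 0" by (simp add: tens_add1)
  then show ?thesis using assms
    by (simp add: transv_mult pair_smult2[of v "-1" u, simplified] add.assoc)
qed

lemma transv_minv:
  fixes u v :: "'a::field^'n"
  assumes "pair v u = 0"
  shows "matrix_inv (mat 1 + tens u v) = mat 1 + tens (- u) v"
  using minv_unique transv_inv_mult[OF assms] by blast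

lemma row_mat1: "row j (mat 1 :: 'a::field^'n^'n) = axis j 1"
  by (simp add: row_def mat_def axis_def vec_eq_iff)

lemma det_row_transv:
  fixes w :: "'a::field^'n"
  assumes "w $ k = 0"
  shows "det (mat 1 + tens (axis k 1) w) = 1"
proof -
  have wsp: "w \<in> vec.span {row j (mat 1 :: 'a^'n^'n) |j. j \<noteq> k}"
  proof -
    have "w = (\<Sum>j\<in>UNIV. w $ j *s axis j 1)" by (simp add: basis_expansion)
    also have "\<dots> = (\<Sum>j\<in>UNIV - {k}. w $ j *s axis j 1)"
      using assms by (simp add: sum.remove[of UNIV k])
    finally have weq: "w = (\<Sum>j\<in>UNIV - {k}. w $ j *s axis j 1)" .
    show ?thesis
      apply (subst weq)
      apply (rule vec.span_sum)
      apply (rule vec.span_scale)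
      apply (rule vec.span_base)
      apply (auto simp: row_mat1)
      done
  qed
  have "mat 1 + tens (axis k 1) w = (\<chi> r. if r = k then row k (mat 1 :: 'a^'n^'n) + w else row r (mat 1))"
    by (simp add: vec_eq_iff tens_def row_def mat_def axis_def)
  then show ?thesis using det_row_span[OF wsp] by simp
qed

lemma det_transv:
  fixes u v :: "'a::field^'n"
  assumes "pair v u = 0"
  shows "det (mat 1 + tens u v) = 1"
proof (cases "u = 0")
  case True then show ?thesis by simp
next
  case False
  then obtain k where uk: "u $ k \<noteq> 0" by (metis vec_eq_iff zero_index)
  define P where "P = mat 1 + tens (u - axis k 1) (axis k 1 :: 'a^'n)"
  define Pi where "Pi = mat 1 + tens ((- inverse (u$k)) *s (u - axis k 1)) (axis k 1 :: 'a^'n)"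
  have "P ** Pi = mat 1"
  proof -
    have e: "pair (axis k 1) (u - axis k 1) = u $ k - 1"
      by (simp add: pair_axis1)
    have "(u - axis k 1) + (- inverse (u$k)) *s (u - axis k 1) +
          pair (axis k 1) ((- inverse (u$k)) *s (u - axis k 1)) *s (u - axis k 1)
        = (1 - inverse (u$k) - inverse (u$k) * (u $ k - 1)) *s (u - axis k 1)"
      unfolding pair_smult2 e by (simp add: algebra_simps)
    also have "\<dots> = 0" using uk by (simp add: field_simps)
    finally have z: "(u - axis k 1) + ((- inverse (u$k)) *s (u - axis k 1) +
          pair (axis k 1) ((- inverse (u$k)) *s (u - axis k 1)) *s (u - axis k 1)) = 0"
      by (simp only: add.assoc)
    show ?thesis unfolding P_def Pi_def transv_mult
      by (simp only: add.assoc tens_add1 z tens_zero1 add_0_right)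
  qed
  then have "det P * det Pi = 1" by (metis det_I det_mul)
  then have dP: "det P \<noteq> 0" by auto
  define w where "w = v v* P"
  have Pax: "P *v axis k 1 = u"
    by (simp add: P_def matrix_vector_mult_add_rdistrib tens_mv pair_axis1)
  have wk: "w $ k = 0"
    using assms by (simp add: w_def pair_axis2[symmetric] pair_vm Pax)
  have "(mat 1 + tens u v) ** P = P ** (mat 1 + tens (axis k 1) w)"
    by (simp add: matrix_add_ldistrib matrix_add_rdistrib' tens_mult mult_tens Pax w_def)
  then have "det (mat 1 + tens u v) * det P = det P * det (mat 1 + tens (axis k 1) w)"
    by (metis det_mul)
  then show ?thesis using det_row_transv[OF wk] dP by simp
qed

lemma conj_tens:
  fixes g gi :: "'a::field^'n^'n"
  shows "g ** tens d phi ** gi = tens (g *v d) (phi v* gi)"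
  by (simp add: mult_tens tens_mult)

lemma conj_transv:
  fixes g gi :: "'a::field^'n^'n"
  assumes "g ** gi = mat 1"
  shows "g ** (mat 1 + tens d phi) ** gi = mat 1 + tens (g *v d) (phi v* gi)"
  using assms by (simp add: matrix_add_ldistrib matrix_add_rdistrib' mult_tens tens_mult)


definition Bset :: "('a::field^'n^'n) set \<Rightarrow> nat \<Rightarrow> ('a^'n^'n) set" where
  "Bset X k = {listprod xs | xs. length xs = k \<and> set xs \<subseteq> X}"

lemma listprod_Nil[simp]: "listprod [] = mat 1" by (simp add: listprod_def)
lemma listprod_Cons[simp]: "listprod (x # xs) = x ** listprod xs" by (simp add: listprod_def)
lemma listprod_append: "listprod (xs @ ys) = listprod xs ** (listprod ys :: 'a::field^'n^'n)"
  by (induction xs) (simp_all add: matrix_mul_assoc)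
lemma listprod_rep1: "listprod (replicate m (mat 1)) = (mat 1 :: 'a::field^'n^'n)"
  by (induction m) simp_all

lemma det_listprod: "set xs \<subseteq> SL \<Longrightarrow> det (listprod xs :: 'a::field^'n^'n) = 1"
  by (induction xs) (simp_all add: det_mul SL_def)

lemma minv_listprod:
  "set xs \<subseteq> SL \<Longrightarrow> matrix_inv (listprod xs :: 'a::field^'n^'n) = listprod (rev (map matrix_inv xs))"
proof (induction xs)
  case Nil then show ?case by simp
next
  case (Cons x xs)
  then have dx: "det x = 1" and dl: "det (listprod xs) = 1" using det_listprod by (auto simp: SL_def)
  have "matrix_inv (listprod (x # xs)) = matrix_inv (listprod xs) ** matrix_inv x"
    using minv_mult[OF dx dl] by simp
  also have "\<dots> = listprod (rev (map matrix_inv xs)) ** listprod [matrix_inv x]"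
    using Cons by simp
  also have "\<dots> = listprod (rev (map matrix_inv (x # xs)))" by (simp add: listprod_append)
  finally show ?case .
qed

lemma Bset_mono_add:
  assumes X1: "mat 1 \<in> X"
  shows "Bset X k \<subseteq> Bset X (m + k)"
proof
  fix g assume "g \<in> Bset X k"
  then obtain xs where xs: "g = listprod xs" "length xs = k" "set xs \<subseteq> X" by (auto simp: Bset_def)
  have "g = listprod (replicate m (mat 1) @ xs)" using xs by (simp add: listprod_append listprod_rep1)
  moreover have "length (replicate m (mat 1) @ xs) = m + k" "set (replicate m (mat 1) @ xs) \<subseteq> X"
    using xs X1 by auto
  ultimately show "g \<in> Bset X (m + k)" unfolding Bset_def by blast
qed

lemma Bset_mono_le:
  assumes X1: "mat 1 \<in> X" and "k \<le> j"
  shows "Bset X k \<subseteq> Bset X j"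
  using Bset_mono_add[OF X1, of k "j - k"] assms(2) by simp

lemma Bset_0: "Bset X 0 = {mat 1}" by (auto simp: Bset_def)

lemma Bset_Suc: "Bset X (Suc k) = {x ** g | x g. x \<in> X \<and> g \<in> Bset X k}"
proof safe
  fix h assume "h \<in> Bset X (Suc k)"
  then obtain xs where xs: "h = listprod xs" "length xs = Suc k" "set xs \<subseteq> X" by (auto simp: Bset_def)
  then obtain y ys where "xs = y # ys" by (cases xs) auto
  then show "\<exists>x g. h = x ** g \<and> x \<in> X \<and> g \<in> Bset X k"
    using xs by (auto simp: Bset_def)
next
  fix x g assume "x \<in> X" "g \<in> Bset X k"
  then show "x ** g \<in> Bset X (Suc k)" unfolding Bset_def
    by clarsimp (metis length_Cons listprod_Cons set_ConsD subset_code(1) insert_subset list.simps(15))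
qed

lemma Bset_SL: "X \<subseteq> SL \<Longrightarrow> g \<in> Bset X k \<Longrightarrow> det g = 1"
  unfolding Bset_def using det_listprod by fastforce

lemma gen_in_Bset:
  assumes XSL: "X \<subseteq> SL" and Xsym: "\<And>x. x \<in> X \<Longrightarrow> matrix_inv x \<in> X"
  shows "g \<in> gen_subgroup X \<Longrightarrow> \<exists>k. g \<in> Bset X k"
proof (induction rule: gen_subgroup.induct)
  case one
  then show ?case using Bset_0 by blast
next
  case (gen x)
  then have "x = listprod [x]" "length [x] = 1" "set [x] \<subseteq> X" by auto
  then show ?case unfolding Bset_def by blast
next
  case (mult a b)
  then obtain xs ys where "a = listprod xs" "set xs \<subseteq> X" "b = listprod ys" "set ys \<subseteq> X"
    by (auto simp: Bset_def)
  then have "a ** b = listprod (xs @ ys)" "set (xs @ ys) \<subseteq> X" by (auto simp: listprod_append)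
  then show ?case unfolding Bset_def by blast
next
  case (inv a)
  then obtain xs where xs: "a = listprod xs" "set xs \<subseteq> X" by (auto simp: Bset_def)
  then have "matrix_inv a = listprod (rev (map matrix_inv xs))"
    using minv_listprod XSL by blast
  moreover have "set (rev (map matrix_inv xs)) \<subseteq> X" using xs Xsym by auto
  ultimately show ?case unfolding Bset_def by blast
qed


lemma chain_abs:
  fixes S :: "nat \<Rightarrow> ('a::field^'m) set" and T :: "'b \<Rightarrow> 'a^'m \<Rightarrow> 'a^'m"
  assumes mono: "\<And>k. S k \<subseteq> S (Suc k)"
    and stepT: "\<And>k. S (Suc k) \<subseteq> (\<Union>x\<in>Z. T x ` S k)"
    and stepT2: "\<And>k x. x \<in> Z \<Longrightarrow> T x ` S k \<subseteq> S (Suc k)"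
    and lin: "\<And>x. x \<in> Z \<Longrightarrow> Vector_Spaces.linear (*s) (*s) (T x)"
    and nz: "\<not> S 0 \<subseteq> {0}"
  shows "S j \<subseteq> vec.span (S CARD('m))"
proof -
  have dimgrow: "(\<forall>i<k. vec.span (S i) \<noteq> vec.span (S (Suc i))) \<Longrightarrow> vec.dim (S k) \<ge> k + 1" for k
  proof (induction k)
    case 0
    have "vec.dim (S 0) \<noteq> 0" using nz by simp
    then show ?case by linarith
  next
    case (Suc k)
    then have IH: "vec.dim (S k) \<ge> k + 1" by simp
    have "vec.span (S k) \<subseteq> vec.span (S (Suc k))" using mono vec.span_mono by blast
    moreover have "vec.span (S k) \<noteq> vec.span (S (Suc k))" using Suc.prems by simp
    ultimately have "vec.dim (S k) < vec.dim (S (Suc k))" using vec.dim_psubset by blast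
    then show ?case using IH by simp
  qed
  have dimle: "vec.dim (S k) \<le> CARD('m)" for k
    using vec.dim_subset_UNIV[of "S k"] by (simp add: vec.dimension_def card_cart_basis)
  obtain k0 where k0: "k0 < CARD('m)" "vec.span (S k0) = vec.span (S (Suc k0))"
    using dimgrow[of "CARD('m)"] dimle[of "CARD('m)"] by force
  have after: "S (k0 + d) \<subseteq> vec.span (S k0)" for d
  proof (induction d)
    case 0
    then show ?case using vec.span_superset by simp
  next
    case (Suc d)
    have "S (k0 + Suc d) \<subseteq> (\<Union>x\<in>Z. T x ` S (k0 + d))" using stepT[of "k0 + d"] by simp
    also have "\<dots> \<subseteq> (\<Union>x\<in>Z. T x ` vec.span (S k0))" using Suc.IH by blast
    also have "\<dots> = (\<Union>x\<in>Z. vec.span (T x ` S k0))"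
      using vec.linear_span_image[OF lin] by (intro SUP_cong) auto
    also have "\<dots> \<subseteq> vec.span (S (Suc k0))"
      using stepT2 by (intro UN_least vec.span_mono) auto
    finally show ?case using k0(2) by simp
  qed
  have monoS: "S i \<subseteq> S j" if "i \<le> j" for i j
    using lift_Suc_mono_le[of S, OF mono that] .
  have "S j \<subseteq> vec.span (S k0)"
  proof (cases "j \<le> k0")
    case True then show ?thesis using monoS[OF True] vec.span_superset by blast
  next
    case False then show ?thesis using after[of "j - k0"] by simp
  qed
  also have "\<dots> \<subseteq> vec.span (S CARD('m))" using monoS[of k0 "CARD('m)"] k0(1) vec.span_mono by simp
  finally show ?thesis .
qed

definition flat :: "'a^'n^'n \<Rightarrow> 'a^('n \<times> 'n)" where
  "flat M = (\<chi> p. M $ fst p $ snd p)"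

definition Lmap :: "'a::field^'n^'n \<Rightarrow> 'a^'n^'n \<Rightarrow> 'a^('n \<times> 'n) \<Rightarrow> 'a^('n \<times> 'n)" where
  "Lmap x xi u = (\<chi> p. \<Sum>k\<in>UNIV. \<Sum>l\<in>UNIV. x $ fst p $ k * u $ (k, l) * xi $ l $ snd p)"

lemma flat_conj: "flat (x ** M ** xi) = Lmap x xi (flat M)"
  unfolding flat_def Lmap_def
  apply (simp add: vec_eq_iff matrix_matrix_mult_def sum_distrib_right sum_distrib_left mult_ac)
  apply (intro allI)
  apply (rule sum.swap)
  done

lemma Lmap_linear: "Vector_Spaces.linear (*s) (*s) (Lmap x xi)"
  unfolding Vector_Spaces.linear_iff
  by (auto intro!: vec.vector_space_axioms
      simp: Lmap_def vec_eq_iff sum.distrib sum_distrib_left distrib_left distrib_right mult_ac)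

lemma flat_zero_iff: "flat M = 0 \<longleftrightarrow> M = 0"
  by (auto simp: flat_def vec_eq_iff)

lemma pair_flat: "pair b (M *v a) = pair (\<chi> p. b $ fst p * a $ snd p) (flat M)"
proof -
  have "pair b (M *v a) = (\<Sum>i\<in>UNIV. \<Sum>j\<in>UNIV. b $ i * a $ j * M $ i $ j)"
    by (simp add: pair_def matrix_vector_mult_def sum_distrib_left mult_ac)
  also have "\<dots> = (\<Sum>p\<in>UNIV \<times> UNIV. b $ fst p * a $ snd p * M $ fst p $ snd p)"
    by (simp add: sum.cartesian_product split_def)
  also have "\<dots> = pair (\<chi> p. b $ fst p * a $ snd p) (flat M)"
    by (simp add: pair_def flat_def UNIV_Times_UNIV)
  finally show ?thesis .
qed


lemma conj_step:
  fixes x g N :: "'a::field^'n^'n"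
  assumes "det x = 1" "det g = 1"
  shows "flat ((x ** g) ** N ** matrix_inv (x ** g)) = Lmap x (matrix_inv x) (flat (g ** N ** matrix_inv g))"
proof -
  have "(x ** g) ** N ** matrix_inv (x ** g) = x ** (g ** N ** matrix_inv g) ** matrix_inv x"
    using minv_mult[OF assms] by (simp add: matrix_mul_assoc)
  then show ?thesis by (simp add: flat_conj)
qed

lemma orbit_span:
  fixes X :: "('a::field^'n^'n) set" and N :: "'a^'n^'n"
  assumes XSL: "X \<subseteq> SL" and Xsym: "\<And>x. x \<in> X \<Longrightarrow> matrix_inv x \<in> X"
    and X1: "mat 1 \<in> X" and Xgen: "gen_subgroup X = SL" and N0: "N \<noteq> 0" and g: "g \<in> SL"
  shows "flat (g ** N ** matrix_inv g) \<in> vec.span ((\<lambda>h. flat (h ** N ** matrix_inv h)) ` Bset X (CARD('n)^2))"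
proof -
  define S where "S k = (\<lambda>h. flat (h ** N ** matrix_inv h)) ` Bset X k" for k
  have ch: "S j \<subseteq> vec.span (S CARD('n \<times> 'n))" for j
  proof (rule chain_abs[where Z = X and T = "\<lambda>x. Lmap x (matrix_inv x)"])
    show "S k \<subseteq> S (Suc k)" for k
      unfolding S_def using Bset_mono_add[OF X1, of k 1] by auto
    show "S (Suc k) \<subseteq> (\<Union>x\<in>X. Lmap x (matrix_inv x) ` S k)" for k
    proof
      fix u assume "u \<in> S (Suc k)"
      then obtain x h where xh: "x \<in> X" "h \<in> Bset X k" "u = flat ((x ** h) ** N ** matrix_inv (x ** h))"
        unfolding S_def Bset_Suc by blast
      have "det x = 1" "det h = 1" using xh XSL Bset_SL[OF XSL] by (auto simp: SL_def)
      then have "u = Lmap x (matrix_inv x) (flat (h ** N ** matrix_inv h))"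
        using xh conj_step by simp
      then show "u \<in> (\<Union>x\<in>X. Lmap x (matrix_inv x) ` S k)"
        using xh unfolding S_def by blast
    qed
    show "Lmap x (matrix_inv x) ` S k \<subseteq> S (Suc k)" if "x \<in> X" for k x
    proof
      fix u assume "u \<in> Lmap x (matrix_inv x) ` S k"
      then obtain h where h: "h \<in> Bset X k" "u = Lmap x (matrix_inv x) (flat (h ** N ** matrix_inv h))"
        unfolding S_def by blast
      have "det x = 1" "det h = 1" using h that XSL Bset_SL[OF XSL] by (auto simp: SL_def)
      then have "u = flat ((x ** h) ** N ** matrix_inv (x ** h))" using h conj_step[of x h N] by simp
      moreover have "x ** h \<in> Bset X (Suc k)" using that h unfolding Bset_Suc by blast
      ultimately show "u \<in> S (Suc k)" unfolding S_def by blast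
    qed
    show "Vector_Spaces.linear (*s) (*s) (Lmap x (matrix_inv x))" for x
      by (rule Lmap_linear)
    show "\<not> S 0 \<subseteq> {0}"
      unfolding S_def Bset_0 using N0 by (simp add: flat_zero_iff)
  qed
  have card: "CARD('n \<times> 'n) = CARD('n)^2" by (simp add: power2_eq_square)
  obtain k where "g \<in> Bset X k" using gen_in_Bset[OF XSL Xsym] g Xgen by blast
  then have "flat (g ** N ** matrix_inv g) \<in> S k" unfolding S_def by blast
  then show ?thesis using ch[of k] card unfolding S_def by auto
qed

lemma find_short:
  fixes X :: "('a::field^'n^'n) set" and N :: "'a^'n^'n"
  assumes XSL: "X \<subseteq> SL" and Xsym: "\<And>x. x \<in> X \<Longrightarrow> matrix_inv x \<in> X"
    and X1: "mat 1 \<in> X" and Xgen: "gen_subgroup X = SL" and N0: "N \<noteq> 0" and g: "g \<in> SL"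
    and nz: "pair L (flat (g ** N ** matrix_inv g)) \<noteq> 0"
  shows "\<exists>xs. length xs = CARD('n)^2 \<and> set xs \<subseteq> X \<and>
           pair L (flat (listprod xs ** N ** matrix_inv (listprod xs))) \<noteq> 0"
proof (rule ccontr)
  assume "\<not> ?thesis"
  then have z: "\<And>u. u \<in> (\<lambda>h. flat (h ** N ** matrix_inv h)) ` Bset X (CARD('n)^2) \<Longrightarrow> pair L u = 0"
    unfolding Bset_def by auto
  have sub: "vec.subspace (Collect (\<lambda>u. pair L u = 0))"
    unfolding vec.subspace_def by (simp add: pair_add2 pair_smult2)
  have "pair L (flat (g ** N ** matrix_inv g)) = 0"
    using vec.span_induct[OF orbit_span[OF XSL Xsym X1 Xgen N0 g] sub] z by blast
  then show False using nz by simp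
qed


lemma tens_col:
  fixes d phi :: "'a::field^'n"
  assumes "tens d phi = tens d' phi'" "phi $ j \<noteq> 0"
  shows "d = (phi' $ j / phi $ j) *s d'"
proof -
  have "d $ i * phi $ j = d' $ i * phi' $ j" for i
    using arg_cong[OF assms(1), of "\<lambda>M. M $ i $ j"] by (simp add: tens_def)
  then show ?thesis using assms(2) by (simp add: vec_eq_iff field_simps)
qed

lemma tens_row:
  fixes d phi :: "'a::field^'n"
  assumes "tens d phi = tens d' phi'" "d $ i \<noteq> 0"
  shows "phi = (d' $ i / d $ i) *s phi'"
proof -
  have "d $ i * phi $ j = d' $ i * phi' $ j" for j
    using arg_cong[OF assms(1), of "\<lambda>M. M $ i $ j"] by (simp add: tens_def)
  then show ?thesis using assms(2) by (simp add: vec_eq_iff field_simps)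
qed

lemma rep_scale:
  fixes d phi :: "'a::field^'n"
  assumes "transv_rep r d phi" "transv_rep r d' phi'"
  shows "\<exists>\<kappa> \<mu>. d = \<kappa> *s d' \<and> phi = \<mu> *s phi'"
proof -
  have eq: "tens d phi = tens d' phi'" using assms by (simp add: transv_rep_def)
  obtain j where "phi $ j \<noteq> 0" using assms by (metis transv_rep_def vec_eq_iff zero_index)
  moreover obtain i where "d $ i \<noteq> 0" using assms by (metis transv_rep_def vec_eq_iff zero_index)
  ultimately show ?thesis using tens_col[OF eq] tens_row[OF eq] by blast
qed

lemma tedge_rep:
  fixes d1 phi1 :: "'a::field^'n"
  assumes r: "transv_rep r d1 phi1" and s: "transv_rep s d2 phi2"
  shows "tedge r s \<longleftrightarrow> pair phi2 d1 \<noteq> 0"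
proof
  assume "tedge r s"
  then obtain d1' phi1' d2' phi2' where h: "transv_rep r d1' phi1'" "transv_rep s d2' phi2'"
    "pair phi2' d1' \<noteq> 0" unfolding tedge_def by blast
  obtain \<kappa> where k: "d1' = \<kappa> *s d1" using rep_scale[OF h(1) r] by blast
  obtain \<mu> where m: "phi2' = \<mu> *s phi2" using rep_scale[OF h(2) s] by blast
  show "pair phi2 d1 \<noteq> 0" using h(3) unfolding k m pair_smult1 pair_smult2 by auto
next
  assume "pair phi2 d1 \<noteq> 0"
  then show "tedge r s" unfolding tedge_def using r s by blast
qed

lemma no_loop:
  fixes d :: "'a::field^'n"
  assumes "transv_rep r d phi" shows "\<not> tedge r r"
  using tedge_rep[OF assms assms] assms by (simp add: transv_rep_def)

lemma all3: "(\<forall>i<(3::nat). P i) \<longleftrightarrow> P 0 \<and> P 1 \<and> P 2"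
  by (auto simp: numeral_3_eq_3 numeral_2_eq_2 less_Suc_eq)

lemma prod3: "(\<Prod>i<(3::nat). f i) = f 0 * f 1 * f (2::nat)"
  by (simp add: numeral_3_eq_3 numeral_2_eq_2 mult_ac)

lemma conj_rep:
  fixes h :: "'a::field^'n^'n" and d phi :: "'a^'n"
  assumes "det h = 1" "d \<noteq> 0" "phi \<noteq> 0" "pair phi d = 0"
  shows "h ** (mat 1 + tens d phi) ** matrix_inv h = mat 1 + tens (h *v d) (phi v* matrix_inv h)"
    "transv_rep (h ** (mat 1 + tens d phi) ** matrix_inv h) (h *v d) (phi v* matrix_inv h)"
    "h ** tens d phi ** matrix_inv h = tens (h *v d) (phi v* matrix_inv h)"
proof -
  note hi = det1_inv[OF assms(1)]
  show eq: "h ** (mat 1 + tens d phi) ** matrix_inv h = mat 1 + tens (h *v d) (phi v* matrix_inv h)"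
    using conj_transv[OF hi(1)] .
  show "h ** tens d phi ** matrix_inv h = tens (h *v d) (phi v* matrix_inv h)" by (rule conj_tens)
  have p: "pair (phi v* matrix_inv h) (h *v d) = 0"
    using assms(4) hi(2) by (simp add: pair_vm matrix_vector_mul_assoc)
  have "h *v d \<noteq> 0"
  proof
    assume "h *v d = 0"
    then have "matrix_inv h *v (h *v d) = 0" by simp
    then show False using assms(2) hi(2) by (simp add: matrix_vector_mul_assoc)
  qed
  moreover have "phi v* matrix_inv h \<noteq> 0"
  proof
    assume "phi v* matrix_inv h = 0"
    then have "(phi v* matrix_inv h) v* h = 0" by simp
    then show False using assms(3) hi(2) by (simp add: vector_matrix_mul_assoc)
  qed
  ultimately show "transv_rep (h ** (mat 1 + tens d phi) ** matrix_inv h) (h *v d) (phi v* matrix_inv h)"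
    unfolding transv_rep_def eq using p by simp
qed


lemma pair_neg2: "pair phi (- x) = - pair phi x"
  by (simp add: pair_def sum_negf)

lemma conjN_value:
  fixes g :: "'a::field^'n^'n" and d phi b a :: "'a^'n"
  shows "pair b ((g ** tens d phi ** gi) *v a) = pair (phi v* gi) a * pair b (g *v d)"
  by (simp add: conj_tens pair_comm_tens)

lemma stage1:
  fixes X :: "('a::field^'n^'n) set" and d phi :: "'a^'n"
  assumes XSL: "X \<subseteq> SL" and Xsym: "\<And>x. x \<in> X \<Longrightarrow> matrix_inv x \<in> X"
    and X1: "mat 1 \<in> X" and Xgen: "gen_subgroup X = SL"
    and trep: "d \<noteq> 0" "phi \<noteq> 0" "pair phi d = 0"
  shows "\<exists>xs. length xs = CARD('n)^2 \<and> set xs \<subseteq> X \<and>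
     pair (phi v* matrix_inv (listprod xs)) d * pair phi (listprod xs *v d) \<noteq> 0"
proof -
  obtain i where pi: "phi $ i \<noteq> 0" using trep(2) by (metis vec_eq_iff zero_index)
  have "\<exists>j. j \<noteq> i \<and> d $ j \<noteq> 0"
  proof (rule ccontr)
    assume "\<not> ?thesis"
    then have z: "\<And>j. j \<noteq> i \<Longrightarrow> d $ j = 0" by blast
    have "pair phi d = phi $ i * d $ i + (\<Sum>j\<in>UNIV - {i}. phi $ j * d $ j)"
      unfolding pair_def by (simp add: sum.remove[of UNIV i])
    also have "\<dots> = phi $ i * d $ i" using z by simp
    finally have "d $ i = 0" using trep(3) pi by simp
    then have "d = 0" using z by (metis vec_eq_iff zero_index)
    then show False using trep(1) by simp
  qed
  then obtain j where ji: "j \<noteq> i" "d $ j \<noteq> 0" by blast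
  define g where "g = mat 1 + tens (axis i 1) (axis j 1 :: 'a^'n)"
  have pe: "pair (axis j 1) (axis i 1 :: 'a^'n) = 0" using ji by (simp only: pair_axis1) (simp add: axis_def)
  have gSL: "g \<in> SL" unfolding g_def SL_def using det_transv[OF pe] by simp
  have gi: "matrix_inv g = mat 1 + tens (- axis i 1) (axis j 1)" unfolding g_def using transv_minv[OF pe] .
  define N where "N = tens d phi"
  have N0: "N \<noteq> 0" unfolding N_def using trep tens_zero_iff by blast
  define L where "L = (\<chi> p. phi $ fst p * d $ snd p :: 'a^('n \<times> 'n))"
  have val: "pair L (flat (h ** N ** matrix_inv h)) =
      pair (phi v* matrix_inv h) d * pair phi (h *v d)" for h
    unfolding L_def N_def pair_flat[symmetric] by (rule conjN_value)
  have v1: "pair phi (g *v d) = d $ j * phi $ i"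
    using trep(3) by (simp add: g_def matrix_vector_mult_add_rdistrib tens_mv pair_add2 pair_smult2
        pair_axis1 pair_axis2)
  have v2: "pair (phi v* matrix_inv g) d = - (phi $ i * d $ j)"
    using trep(3) by (simp add: gi vector_matrix_mult_add_rdistrib vm_tens pair_add1 pair_smult1
        pair_axis1 pair_axis2 pair_neg2 pair_diff1)
  have "pair L (flat (g ** N ** matrix_inv g)) \<noteq> 0"
    unfolding val v1 v2 using ji pi by simp
  from find_short[OF XSL Xsym X1 Xgen N0 gSL this] show ?thesis
    unfolding val by blast
qed


lemma exists_outside:
  fixes d a' :: "'a::field^'n"
  assumes "CARD('n) \<ge> 3"
  shows "\<exists>c. c \<notin> vec.span {d, a'}"
proof (rule ccontr)
  assume "\<not> ?thesis"
  then have "vec.span {d, a'} = UNIV" by auto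
  then have "vec.dim (UNIV :: ('a^'n) set) \<le> card {d, a'}"
    using vec.dim_le_card[of UNIV "{d, a'}"] by auto
  also have "\<dots> \<le> 2" by (simp add: card_insert_le_m1)
  finally show False using assms by (simp add: card_cart_basis)
qed

lemma functional_exists:
  fixes c d p :: "'a::field^'n"
  assumes ind: "vec.independent {c, d, p}" and cd: "c \<noteq> d" "c \<noteq> p"
  shows "\<exists>e. pair e c = 0 \<and> pair e d = 1 \<and> pair e p = 1"
proof -
  obtain i :: 'n where True by blast
  obtain G where G: "Vector_Spaces.linear (*s) (*s) G"
    "\<forall>x\<in>{c, d, p}. G x = (if x = c then 0 else axis i 1 :: 'a^'n)"
    using vec.linear_independent_extend[OF ind, where f="\<lambda>x. if x = c then 0 else (axis i 1 :: 'a^'n)"]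
    by auto
  define e where "e = (\<chi> j. G (axis j 1) $ i)"
  have pe: "pair e x = G x $ i" for x
    using linear_componentwise[OF G(1), of x i] by (simp add: pair_def e_def mult_ac)
  show ?thesis using G(2) cd by (intro exI[of _ e]) (simp add: pe)
qed

lemma stage2:
  fixes X :: "('a::field^'n^'n) set" and d phi a' b' :: "'a^'n"
  assumes XSL: "X \<subseteq> SL" and Xsym: "\<And>x. x \<in> X \<Longrightarrow> matrix_inv x \<in> X"
    and X1: "mat 1 \<in> X" and Xgen: "gen_subgroup X = SL" and n3: "CARD('n) \<ge> 3"
    and trep: "d \<noteq> 0" "phi \<noteq> 0" "pair phi d = 0"
    and al: "pair b' d \<noteq> 0" and be: "pair phi a' \<noteq> 0"
  shows "\<exists>xs. length xs = CARD('n)^2 \<and> set xs \<subseteq> X \<and>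
     pair phi a' * (pair (phi v* matrix_inv (listprod xs)) d * pair b' (listprod xs *v d)) +
     pair b' d * (pair (phi v* matrix_inv (listprod xs)) a' * pair phi (listprod xs *v d)) \<noteq> 0"
proof -
  define \<alpha> where "\<alpha> = pair b' d"
  define \<beta> where "\<beta> = pair phi a'"
  define P where "P = vec.span {d, a'}"
  obtain i where pi: "phi $ i \<noteq> 0" using trep(2) by (metis vec_eq_iff zero_index)
  obtain c1 where c1: "c1 \<notin> P" using exists_outside[OF n3] unfolding P_def by blast
  have "\<exists>c. pair phi c \<noteq> 0 \<and> c \<notin> P"
  proof (cases "axis i 1 \<in> P")
    case False then show ?thesis using pi by (intro exI[of _ "axis i 1"]) (simp add: pair_axis2)
  next
    case True
    show ?thesis
    proof (cases "pair phi c1 = 0")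
      case False then show ?thesis using c1 by blast
    next
      case z: True
      have "axis i 1 + c1 \<notin> P"
      proof
        assume "axis i 1 + c1 \<in> P"
        then have "(axis i 1 + c1) - axis i 1 \<in> P" unfolding P_def using True P_def vec.span_diff by blast
        then show False using c1 by simp
      qed
      moreover have "pair phi (axis i 1 + c1) \<noteq> 0" using z pi by (simp add: pair_add2 pair_axis2)
      ultimately show ?thesis by blast
    qed
  qed
  then obtain c where c: "pair phi c \<noteq> 0" "c \<notin> P" by blast
  define p where "p = (\<beta> * pair b' c) *s d + (\<alpha> * pair phi c) *s a'"
  have pP: "p \<in> P" unfolding p_def P_def
    by (intro vec.span_add vec.span_scale vec.span_base) auto
  have dP: "d \<in> P" unfolding P_def by (intro vec.span_base) auto
  have spdp: "vec.span {d, p} \<subseteq> P"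
    unfolding P_def using pP dP P_def by (intro vec.span_minimal) (auto simp: vec.subspace_span)
  have phip: "pair phi p = \<alpha> * pair phi c * \<beta>"
    using trep(3) by (simp add: p_def pair_add2 pair_smult2 \<beta>_def)
  have ind: "vec.independent {c, d, p}"
  proof (rule vec.independent_insertI)
    show "c \<notin> vec.span {d, p}" using c spdp by blast
    show "vec.independent {d, p}"
    proof (rule vec.independent_insertI)
      show "d \<notin> vec.span {p}"
      proof
        assume "d \<in> vec.span {p}"
        then obtain k where k: "d = k *s p" by (auto simp: vec.span_singleton)
        then have "k * pair phi p = 0" using trep(3) by (simp add: pair_smult2)
        then have "k = 0" using phip c al be by (simp add: \<alpha>_def \<beta>_def)
        then show False using k trep(1) by simp
      qed
      show "vec.independent {p}"
      proof (rule vec.independent_insertI)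
        show "p \<notin> vec.span {}" using phip c al be by (auto simp: \<alpha>_def \<beta>_def)
      qed (rule vec.independent_empty)
    qed
  qed
  have cd: "c \<noteq> d" "c \<noteq> p" using c dP pP by auto
  obtain e where e: "pair e c = 0" "pair e d = 1" "pair e p = 1"
    using functional_exists[OF ind cd] by blast
  define g where "g = mat 1 + tens c e"
  have gSL: "g \<in> SL" unfolding g_def SL_def using det_transv[OF e(1)] by simp
  have gi: "matrix_inv g = mat 1 + tens (- c) e" unfolding g_def using transv_minv[OF e(1)] .
  define N where "N = tens d phi"
  have N0: "N \<noteq> 0" unfolding N_def using trep tens_zero_iff by blast
  define L where "L = \<beta> *s (\<chi> p. b' $ fst p * d $ snd p :: 'a^('n \<times> 'n)) +
                      \<alpha> *s (\<chi> p. phi $ fst p * a' $ snd p :: 'a^('n \<times> 'n))"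
  have val: "pair L (flat (h ** N ** matrix_inv h)) =
      \<beta> * (pair (phi v* matrix_inv h) d * pair b' (h *v d)) +
      \<alpha> * (pair (phi v* matrix_inv h) a' * pair phi (h *v d))" for h
    unfolding L_def N_def pair_add1 pair_smult1 pair_flat[symmetric] conjN_value ..
  have gd: "g *v d = d + c" using e(2)
    by (simp add: g_def matrix_vector_mult_add_rdistrib tens_mv)
  have pg: "phi v* matrix_inv g = phi - pair phi c *s e"
    by (simp add: gi vector_matrix_mult_add_rdistrib vm_tens pair_neg2)
  have ep: "\<beta> * pair b' c + \<alpha> * pair phi c * pair e a' = 1"
    using e(3) e(2) by (simp add: p_def pair_add2 pair_smult2)
  have "pair L (flat (g ** N ** matrix_inv g)) =
      \<beta> * ((0 - pair phi c * 1) * (\<alpha> + pair b' c)) +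
      \<alpha> * ((\<beta> - pair phi c * pair e a') * (0 + pair phi c))"
    unfolding val gd pg using e(2) trep(3)
    by (simp add: pair_add2 pair_diff1 pair_smult1 \<alpha>_def \<beta>_def)
  also have "\<dots> = - pair phi c * (\<beta> * pair b' c + \<alpha> * pair phi c * pair e a')"
    by (simp add: algebra_simps)
  also have "\<dots> = - pair phi c" using ep by simp
  finally have "pair L (flat (g ** N ** matrix_inv g)) \<noteq> 0" using c by simp
  from find_short[OF XSL Xsym X1 Xgen N0 gSL this] show ?thesis
    unfolding val \<alpha>_def \<beta>_def by blast
qed


lemma rep_ne1:
  fixes v :: "'a::field^'n"
  assumes "transv_rep r v \<psi>" shows "r \<noteq> mat 1"
  using assms tens_zero_iff[of v \<psi>] by (auto simp: transv_rep_def)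

theorem lemma4p6:
  fixes X :: "('a::field ^'n ^'n) set" and d phi :: "'a ^'n"
  assumes n3: "CARD('n) \<ge> 3"
    and XSL: "X \<subseteq> SL"
    and Xsym: "\<And>x. x \<in> X \<Longrightarrow> matrix_inv x \<in> X"
    and X1: "mat 1 \<in> X"
    and Xgen: "gen_subgroup X = SL"
    and trep: "d \<noteq> 0" "phi \<noteq> 0" "pair phi d = 0"
    and tK: "\<And>c. mat 1 + tens (c *s d) phi \<in> X"
    and Y1: "Y1 = {listprod xs ** (mat 1 + tens (c *s d) phi) ** matrix_inv (listprod xs) | xs c.
                    length xs = CARD('n)^2 \<and> set xs \<subseteq> X}"
    and twoway: "\<And>r s. r \<in> Y1 - {mat 1} \<Longrightarrow> s \<in> Y1 - {mat 1} \<Longrightarrow> tedge r s \<Longrightarrow> tedge s r"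
  shows "\<exists>k::nat. \<exists>r :: nat \<Rightarrow> 'a ^'n ^'n. \<exists>v \<psi> :: nat \<Rightarrow> 'a ^'n.
           k \<ge> 3 \<and> inj_on r {..<k} \<and>
           (\<forall>i<k. r i \<in> Y1 - {mat 1} \<and> transv_rep (r i) (v i) (\<psi> i)) \<and>
           (\<forall>i<k. \<forall>j<k. i \<noteq> j \<longrightarrow>
              (tedge (r i) (r j) \<longleftrightarrow> (j = Suc i mod k \<or> i = Suc j mod k))) \<and>
           (\<Prod>i<k. pair (\<psi> i) (v (Suc i mod k))) +
             (-1)^(k-1) * (\<Prod>i<k. pair (\<psi> (Suc i mod k)) (v i)) \<noteq> 0"
proof -
  have memY: "listprod xs ** (mat 1 + tens d phi) ** matrix_inv (listprod xs) \<in> Y1"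
    if "length xs = CARD('n)^2" "set xs \<subseteq> X" for xs
    unfolding Y1 using that by (intro CollectI exI[of _ xs] exI[of _ 1]) simp
  have detX: "set xs \<subseteq> X \<Longrightarrow> det (listprod xs) = 1" for xs
    using XSL det_listprod by blast
  define R0 where "R0 = mat 1 + tens d phi"
  have R0Y: "R0 \<in> Y1" using memY[of "replicate (CARD('n)^2) (mat 1)"] X1
    by (simp add: listprod_rep1 R0_def)
  have R0rep: "transv_rep R0 d phi" using trep by (simp add: transv_rep_def R0_def)
  obtain xs1 where xs1: "length xs1 = CARD('n)^2" "set xs1 \<subseteq> X"
     "pair (phi v* matrix_inv (listprod xs1)) d * pair phi (listprod xs1 *v d) \<noteq> 0"
    using stage1[OF XSL Xsym X1 Xgen trep] by blast
  define a' where "a' = listprod xs1 *v d"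
  define b' where "b' = phi v* matrix_inv (listprod xs1)"
  have al: "pair b' d \<noteq> 0" and be: "pair phi a' \<noteq> 0" using xs1(3) by (auto simp: a'_def b'_def)
  define R1 where "R1 = listprod xs1 ** (mat 1 + tens d phi) ** matrix_inv (listprod xs1)"
  have R1Y: "R1 \<in> Y1" unfolding R1_def using memY xs1 by blast
  have R1rep: "transv_rep R1 a' b'"
    unfolding R1_def a'_def b'_def using conj_rep(2)[OF detX[OF xs1(2)] trep] .
  obtain xs2 where xs2: "length xs2 = CARD('n)^2" "set xs2 \<subseteq> X"
     "pair phi a' * (pair (phi v* matrix_inv (listprod xs2)) d * pair b' (listprod xs2 *v d)) +
      pair b' d * (pair (phi v* matrix_inv (listprod xs2)) a' * pair phi (listprod xs2 *v d)) \<noteq> 0"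
    using stage2[OF XSL Xsym X1 Xgen n3 trep al be] by blast
  define A3 where "A3 = listprod xs2 *v d"
  define F3 where "F3 = phi v* matrix_inv (listprod xs2)"
  define R2 where "R2 = listprod xs2 ** (mat 1 + tens d phi) ** matrix_inv (listprod xs2)"
  have R2Y: "R2 \<in> Y1" unfolding R2_def using memY xs2 by blast
  have R2rep: "transv_rep R2 A3 F3"
    unfolding R2_def A3_def F3_def using conj_rep(2)[OF detX[OF xs2(2)] trep] .
  have Phi: "pair phi a' * pair b' A3 * pair F3 d + pair b' d * pair F3 a' * pair phi A3 \<noteq> 0"
    using xs2(3) unfolding A3_def F3_def by (simp add: mult_ac)
  note R0n = rep_ne1[OF R0rep] and R1n = rep_ne1[OF R1rep] and R2n = rep_ne1[OF R2rep]
  have R0m: "R0 \<in> Y1 - {mat 1}" using R0Y R0n by simp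
  have R1m: "R1 \<in> Y1 - {mat 1}" using R1Y R1n by simp
  have R2m: "R2 \<in> Y1 - {mat 1}" using R2Y R2n by simp
  have E01: "tedge R0 R1 \<longleftrightarrow> pair b' d \<noteq> 0" using tedge_rep[OF R0rep R1rep] .
  have E10: "tedge R1 R0 \<longleftrightarrow> pair phi a' \<noteq> 0" using tedge_rep[OF R1rep R0rep] .
  have E02: "tedge R0 R2 \<longleftrightarrow> pair F3 d \<noteq> 0" using tedge_rep[OF R0rep R2rep] .
  have E20: "tedge R2 R0 \<longleftrightarrow> pair phi A3 \<noteq> 0" using tedge_rep[OF R2rep R0rep] .
  have E12: "tedge R1 R2 \<longleftrightarrow> pair F3 a' \<noteq> 0" using tedge_rep[OF R1rep R2rep] .
  have E21: "tedge R2 R1 \<longleftrightarrow> pair b' A3 \<noteq> 0" using tedge_rep[OF R2rep R1rep] .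
  have all: "tedge R0 R1 \<and> tedge R1 R0 \<and> tedge R0 R2 \<and> tedge R2 R0 \<and> tedge R1 R2 \<and> tedge R2 R1"
  proof (cases "pair phi a' * pair b' A3 * pair F3 d = 0")
    case False
    then have "tedge R1 R0" "tedge R2 R1" "tedge R0 R2" using E10 E21 E02 by auto
    then show ?thesis using twoway R0m R1m R2m by blast
  next
    case True
    have "pair b' d * pair F3 a' * pair phi A3 \<noteq> 0" using Phi \<open>pair phi a' * pair b' A3 * pair F3 d = 0\<close> by (metis add.left_neutral)
    then have "tedge R0 R1" "tedge R1 R2" "tedge R2 R0" using E01 E12 E20 by auto
    then show ?thesis using twoway R0m R1m R2m by blast
  qed
  have ne: "R0 \<noteq> R1" "R0 \<noteq> R2" "R1 \<noteq> R2"
    using all no_loop[OF R0rep] no_loop[OF R1rep] by auto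
  define rr where "rr = (\<lambda>i::nat. if i = 0 then R0 else if i = 1 then R1 else R2)"
  define vv where "vv = (\<lambda>i::nat. if i = 0 then d else if i = 1 then a' else A3)"
  define pp where "pp = (\<lambda>i::nat. if i = 0 then phi else if i = 1 then b' else F3)"
  have inj: "inj_on rr {..<3}"
    unfolding inj_on_def lessThan_iff using ne
    by (auto simp: all3 rr_def)
  have mem: "\<forall>i<3. rr i \<in> Y1 - {mat 1} \<and> transv_rep (rr i) (vv i) (pp i)"
    unfolding all3 rr_def vv_def pp_def using R0m R1m R2m R0rep R1rep R2rep by simp
  have edges: "\<forall>i<3. \<forall>j<3. i \<noteq> j \<longrightarrow>
              (tedge (rr i) (rr j) \<longleftrightarrow> (j = Suc i mod 3 \<or> i = Suc j mod 3))"
    unfolding all3 rr_def using all by simp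
  have prodne: "(\<Prod>i<3. pair (pp i) (vv (Suc i mod 3))) +
             (-1)^(3-1) * (\<Prod>i<3. pair (pp (Suc i mod 3)) (vv i)) \<noteq> 0"
    unfolding prod3 pp_def vv_def using Phi by (simp add: mult_ac)
  show ?thesis
    apply (rule exI[of _ 3], rule exI[of _ rr], rule exI[of _ vv], rule exI[of _ pp])
    using inj mem edges prodne by simp
qed

end
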